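(* Let $0<p<1/2$ and let $m$ be a bounded generating sequence. There is a constant $c<\infty$ (depending only on $p$ and $m$) such that for every $N\in\mathbb{N}$ and every bounded measurable function $a$ on $G_m$ with $\operatorname{supp}a\subset I_N$, $\int_{I_N}a\,d\mu=0$ and $\|a\|_\infty\le M_N^{1/p}$ (i.e. a $p$-atom supported on $I_N$), one has $$\int_{G_m\setminus I_N}\Big(\sup_{n\in\mathbb{N}_+}\frac{|\sigma_na|}{(n+1)^{1/p-2}}\Big)^p d\mu\le c.$$
   Context: Let $m=(m_0,m_1,\dots)$ be a sequence of integers $m_k\ge 2$ with $\sup_k m_k<\infty$. $G_m=\prod_k Z_{m_k}$ (where $Z_{m_k}=\{0,\dots,m_k-1\}$ is the group of integers mod $m_k$), elements $x=(x_0,x_1,\dots)$, normalized Haar measure $\mu$ (product of uniform measures $\mu_k(\{j\})=1/m_k$). $M_0=1$, $M_{k+1}=m_kM_k$; every $n\in\mathbb{N}$ is uniquely $n=\sum_jn_jM_j$, $n_j\in Z_{m_j}$. $I_N=\{y\in G_m: y_0=\dots=y_{N-1}=0\}$, so $\mu(I_N)=M_N^{-1}$. $r_k(x)=\exp(2\pi ix_k/m_k)$, $\psi_n=\prod_kr_k^{n_k}$. For integrable $f$: $\widehat f(n)=\int_{G_m}f\overline{\psi_n}\,d\mu$, $S_nf=\sum_{k=0}^{n-1}\widehat f(k)\psi_k$ ($S_0f=0$), $\sigma_nf=\frac1n\sum_{k=0}^{n-1}S_kf$ for $n\ge1$. *)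

theory Defs
  imports "HOL-Probability.Probability"
begin

definition Gm_measure :: "(nat \<Rightarrow> nat) \<Rightarrow> (nat \<Rightarrow> nat) measure" where
  "Gm_measure m = (\<Pi>\<^sub>M k\<in>UNIV. uniform_count_measure {..<m k})"

definition Mseq :: "(nat \<Rightarrow> nat) \<Rightarrow> nat \<Rightarrow> nat" where
  "Mseq m k = (\<Prod>j<k. m j)"

definition I_set :: "(nat \<Rightarrow> nat) \<Rightarrow> nat \<Rightarrow> (nat \<Rightarrow> nat) set" where
  "I_set m N = {y \<in> space (Gm_measure m). \<forall>j<N. y j = 0}"

text \<open>j-th digit of n in the mixed radix expansion n = sum n_j M_j.\<close>
definition digit :: "(nat \<Rightarrow> nat) \<Rightarrow> nat \<Rightarrow> nat \<Rightarrow> nat" where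
  "digit m n j = n div Mseq m j mod m j"

definition rademacher :: "(nat \<Rightarrow> nat) \<Rightarrow> nat \<Rightarrow> (nat \<Rightarrow> nat) \<Rightarrow> complex" where
  "rademacher m k x = cis (2 * pi * real (x k) / real (m k))"

text \<open>psi_n = prod_k r_k^{n_k}; only finitely many digits are nonzero
  (all digits with index j >= n vanish since M_j >= 2^j > n).\<close>
definition psi :: "(nat \<Rightarrow> nat) \<Rightarrow> nat \<Rightarrow> (nat \<Rightarrow> nat) \<Rightarrow> complex" where
  "psi m n x = (\<Prod>j\<in>{j. digit m n j \<noteq> 0}. rademacher m j x ^ digit m n j)"

definition fourier :: "(nat \<Rightarrow> nat) \<Rightarrow> ((nat \<Rightarrow> nat) \<Rightarrow> complex) \<Rightarrow> nat \<Rightarrow> complex" where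
  "fourier m f n = (\<integral>x. f x * cnj (psi m n x) \<partial>Gm_measure m)"

definition partial_sum :: "(nat \<Rightarrow> nat) \<Rightarrow> ((nat \<Rightarrow> nat) \<Rightarrow> complex) \<Rightarrow> nat \<Rightarrow> (nat \<Rightarrow> nat) \<Rightarrow> complex" where
  "partial_sum m f n x = (\<Sum>k<n. fourier m f k * psi m k x)"

definition fejer :: "(nat \<Rightarrow> nat) \<Rightarrow> ((nat \<Rightarrow> nat) \<Rightarrow> complex) \<Rightarrow> nat \<Rightarrow> (nat \<Rightarrow> nat) \<Rightarrow> complex" where
  "fejer m f n x = (\<Sum>k<n. partial_sum m f k x) / of_nat n"

definition ennpowr :: "ennreal \<Rightarrow> real \<Rightarrow> ennreal" where
  "ennpowr t p = (if t = \<infinity> then \<infinity> else ennreal (enn2real t powr p))"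

end

theory Submission
  imports Defs
begin


locale vil = fixes m :: "nat \<Rightarrow> nat" assumes m2: "\<And>k. 2 \<le> m k"
begin

lemma Mseq_Suc: "Mseq m (Suc k) = m k * Mseq m k"
  by (simp add: Mseq_def)

lemma Mseq_0[simp]: "Mseq m 0 = 1"
  by (simp add: Mseq_def)

lemma m_pos: "0 < m k" using m2[of k] by linarith

lemma Mseq_pos: "0 < Mseq m k" unfolding Mseq_def by (rule prod_pos) (simp add: m_pos)

lemma Mseq_dvd: "i \<le> j \<Longrightarrow> Mseq m i dvd Mseq m j"
proof (induction j)
  case 0 then show ?case by simp
next
  case (Suc j)
  then show ?case
    by (cases "i = Suc j") (auto simp: Mseq_Suc)
qed

lemma Mseq_pow2: "2 ^ k \<le> Mseq m k"
proof (induction k)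
  case 0 then show ?case by simp
next
  case (Suc k)
  then show ?case using mult_le_mono[OF m2[of k] Suc.IH] by (simp add: Mseq_Suc)
qed

lemma Mseq_mono: "i \<le> j \<Longrightarrow> Mseq m i \<le> Mseq m j"
  by (metis Mseq_dvd Mseq_pos dvd_imp_le)

lemma Mseq_gt: "k < Mseq m k"
  using Mseq_pow2[of k] less_exp[of k] by linarith

lemma digit_alt: "digit m n i = n mod Mseq m (Suc i) div Mseq m i"
proof -
  have "n mod (Mseq m i * m i) = Mseq m i * (n div Mseq m i mod m i) + n mod Mseq m i"
    by (rule mod_mult2_eq)
  then show ?thesis
    using Mseq_pos[of i] by (simp add: digit_def Mseq_Suc mult.commute)
qed

lemma digit_small: "n < Mseq m i \<Longrightarrow> digit m n i = 0"
  by (simp add: digit_def)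

lemma digit_low: assumes "i < N" shows "digit m (q * Mseq m N + r) i = digit m r i"
proof -
  have "Mseq m (Suc i) dvd Mseq m N" using assms by (simp add: Mseq_dvd)
  then have "(q * Mseq m N + r) mod Mseq m (Suc i) = r mod Mseq m (Suc i)"
    by (metis mod_mult_self3 dvd_mult2 dvd_imp_mod_0 mod_add_left_eq add.left_neutral mult.commute)
  then show ?thesis by (simp add: digit_alt)
qed

lemma digit_low0: assumes "i < N" shows "digit m (q * Mseq m N) i = 0"
  using digit_low[OF assms, of q 0] by (simp add: digit_def)

lemma digit_high: assumes "N \<le> i" "r < Mseq m N"
  shows "digit m (q * Mseq m N + r) i = digit m (q * Mseq m N) i"
proof -
  obtain P where P: "Mseq m i = Mseq m N * P" using Mseq_dvd[OF assms(1)] by (auto elim: dvdE)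
  have pos: "0 < Mseq m N" using Mseq_pos .
  have "(q * Mseq m N + r) div Mseq m i = q div P"
    unfolding P div_mult2_eq using pos assms(2) by simp
  moreover have "(q * Mseq m N) div Mseq m i = q div P"
    unfolding P div_mult2_eq using pos by simp
  ultimately show ?thesis by (simp add: digit_def)
qed

lemma digit_add: assumes "r < Mseq m N"
  shows "digit m (q * Mseq m N + r) i = digit m (q * Mseq m N) i + digit m r i"
proof (cases "i < N")
  case True then show ?thesis by (simp add: digit_low digit_low0)
next
  case False
  then have "Mseq m N \<le> Mseq m i" using Mseq_mono by simp
  then have "digit m r i = 0" using digit_small assms by simp
  then show ?thesis using digit_high[OF _ assms] False by simp
qed

lemma psi_fin: assumes "n < Mseq m K"
  shows "psi m n x = (\<Prod>j<K. rademacher m j x ^ digit m n j)"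
proof -
  have sub: "{j. digit m n j \<noteq> 0} \<subseteq> {..<K}"
  proof
    fix j assume "j \<in> {j. digit m n j \<noteq> 0}"
    then have "digit m n j \<noteq> 0" by simp
    show "j \<in> {..<K}"
    proof (rule ccontr)
      assume "j \<notin> {..<K}"
      then have "Mseq m K \<le> Mseq m j" using Mseq_mono by simp
      then show False using digit_small assms \<open>digit m n j \<noteq> 0\<close> by simp
    qed
  qed
  show ?thesis unfolding psi_def
    by (rule prod.mono_neutral_left) (use sub in auto)
qed

lemma psi_mult: assumes "r < Mseq m N"
  shows "psi m (q * Mseq m N + r) x = psi m (q * Mseq m N) x * psi m r x"
proof -
  define K where "K = q * Mseq m N + r + N"
  have K1: "q * Mseq m N + r < Mseq m K" using Mseq_gt[of K] K_def by simp
  have K2: "q * Mseq m N < Mseq m K" and K3: "r < Mseq m K" using K1 by auto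
  show ?thesis
    unfolding psi_fin[OF K1] psi_fin[OF K2] psi_fin[OF K3]
    by (simp add: digit_add[OF assms] power_add prod.distrib)
qed

lemma psi_single: assumes "b < m K"
  shows "psi m (b * Mseq m K) x = rademacher m K x ^ b"
proof -
  have lt: "b * Mseq m K < Mseq m (Suc K)"
    using assms Mseq_pos[of K] by (simp add: Mseq_Suc)
  have "digit m (b * Mseq m K) K = b"
    using assms Mseq_pos[of K] by (simp add: digit_def)
  then show ?thesis
    unfolding psi_fin[OF lt] by (simp add: digit_low0)
qed

lemma psi_one: assumes "r < Mseq m N" and "\<forall>i<N. y i = 0"
  shows "psi m r y = 1"
  unfolding psi_fin[OF assms(1)] using assms(2) by (simp add: rademacher_def)

lemma norm_psi: "norm (psi m n x) = 1"
  unfolding psi_def by (simp add: prod_norm[symmetric] norm_power rademacher_def)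

lemma psi_0: "psi m 0 x = 1"
  by (simp add: psi_def digit_def)


lemma sum_split_add: "(\<Sum>k<(a::nat)+b. f k) = (\<Sum>k<a. f k) + (\<Sum>r<b. f (a+r))"
  by (induction b) (simp_all add: add.assoc)

lemma sum_blocks: "(\<Sum>k<(Q::nat)*K. f k) = (\<Sum>q<Q. \<Sum>r<K. f (q*K+r))"
proof (induction Q)
  case 0 then show ?case by simp
next
  case (Suc Q)
  have "(\<Sum>k<Suc Q*K. f k) = (\<Sum>k<Q*K + K. f k)" by (simp add: add.commute)
  also have "\<dots> = (\<Sum>k<Q*K. f k) + (\<Sum>r<K. f (Q*K+r))" by (rule sum_split_add)
  finally show ?case using Suc by simp
qed

lemma sum_blocks2: "(\<Sum>k<(Q::nat)*K+R. f k) = (\<Sum>q<Q. \<Sum>r<K. f (q*K+r)) + (\<Sum>r<R. f (Q*K+r))"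
  by (simp add: sum_split_add sum_blocks)

lemma geom0: assumes "x K \<noteq> 0" "x K < m K"
  shows "(\<Sum>b<m K. rademacher m K x ^ b) = 0"
proof -
  define \<omega> where "\<omega> = rademacher m K x"
  have mpos: "0 < real (m K)" using m_pos[of K] by simp
  have pw1: "\<omega> ^ m K = cis (real (m K) * (2 * pi * real (x K) / real (m K)))"
    by (simp only: \<omega>_def rademacher_def Complex.DeMoivre)
  have eq: "real (m K) * (2 * pi * real (x K) / real (m K)) = 2 * pi * real (x K)"
    using mpos by (simp add: field_simps)
  have pw: "\<omega> ^ m K = 1" unfolding pw1 eq by (rule cis_multiple_2pi) simp
  have ne: "\<omega> \<noteq> 1"
  proof
    assume "\<omega> = 1"
    then have "cos (2 * pi * real (x K) / real (m K)) = 1"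
      unfolding \<omega>_def rademacher_def by (metis cis.sel(1) one_complex.sel(1))
    then obtain n :: int where n: "2 * pi * real (x K) / real (m K) = real_of_int n * 2 * pi"
      using cos_one_2pi_int by auto
    have nn: "real (x K) / real (m K) = real_of_int n"
    proof -
      have "real (x K) / real (m K) = (2*pi*real (x K)/real (m K)) / (2*pi)" by simp
      also have "\<dots> = real_of_int n * 2 * pi / (2*pi)" by (simp only: n)
      also have "\<dots> = real_of_int n" by simp
      finally show ?thesis .
    qed
    have "0 < real (x K) / real (m K)" using assms(1) mpos by simp
    then have "0 < n" using nn by simp
    moreover have "real (x K) / real (m K) < 1" using assms(2) mpos by simp
    then have "n < 1" using nn by simp
    ultimately show False by simp
  qed
  show ?thesis using geometric_sum[OF ne, of "m K"] pw by (simp add: \<omega>_def)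
qed

lemma Dsum: "(\<Sum>r<Mseq m K. psi m r x) = (\<Prod>i<K. \<Sum>b<m i. rademacher m i x ^ b)"
proof (induction K)
  case 0 then show ?case by (simp add: psi_0)
next
  case (Suc K)
  have "(\<Sum>r<Mseq m (Suc K). psi m r x) = (\<Sum>b<m K. \<Sum>r<Mseq m K. psi m (b * Mseq m K + r) x)"
    by (simp add: Mseq_Suc sum_blocks)
  also have "\<dots> = (\<Sum>b<m K. rademacher m K x ^ b * (\<Sum>r<Mseq m K. psi m r x))"
    by (intro sum.cong refl) (simp add: psi_mult psi_single sum_distrib_left)
  also have "\<dots> = (\<Sum>b<m K. rademacher m K x ^ b) * (\<Prod>i<K. \<Sum>b<m i. rademacher m i x ^ b)"
    by (simp add: sum_distrib_right Suc)
  finally show ?case by (simp add: mult.commute)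
qed

lemma Dzero: assumes "\<forall>i. x i < m i" "i < K" "x i \<noteq> 0"
  shows "(\<Sum>r<Mseq m K. psi m r x) = 0"
  unfolding Dsum using assms geom0[of x i] by (metis (no_types, lifting) finite_lessThan lessThan_iff prod_zero_iff)

definition "DD x r = (\<Sum>k<r. psi m k x)"
definition "TT x R = (\<Sum>r<R. DD x r)"

lemma char_sum_bound:
  fixes f g :: "nat \<Rightarrow> complex"
  assumes K: "0 < K" and mul: "\<And>w b. b < K \<Longrightarrow> f (w*K+b) = f (w*K) * g b"
    and g0: "(\<Sum>b<K. g b) = 0" and nf: "\<And>u. norm (f u) \<le> 1" and ng: "\<And>b. norm (g b) \<le> 1"
  shows "norm (\<Sum>u<V. f u) \<le> K"
proof -
  define Q R where "Q = V div K" and "R = V mod K"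
  have V: "V = Q*K + R" by (simp add: Q_def R_def)
  have "(\<Sum>u<V. f u) = (\<Sum>q<Q. \<Sum>r<K. f (q*K+r)) + (\<Sum>r<R. f (Q*K+r))"
    unfolding V by (rule sum_blocks2)
  also have "(\<Sum>q<Q. \<Sum>r<K. f (q*K+r)) = 0"
    by (simp add: mul sum_distrib_left[symmetric] g0)
  finally have "(\<Sum>u<V. f u) = (\<Sum>r<R. f (Q*K+r))" by simp
  also have "norm \<dots> \<le> (\<Sum>r<R. norm (f (Q*K+r)))" by (rule norm_sum)
  also have "\<dots> \<le> (\<Sum>r<R. 1)" by (intro sum_mono nf)
  also have "\<dots> \<le> K" using K by (simp add: R_def)
  finally show ?thesis .
qed

lemma DD_bound: assumes "\<forall>i. x i < m i" "x s \<noteq> 0"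
  shows "norm (DD x r) \<le> Mseq m (Suc s)"
  unfolding DD_def
proof (rule char_sum_bound)
  show "0 < Mseq m (Suc s)" by (rule Mseq_pos)
  show "\<And>w b. b < Mseq m (Suc s) \<Longrightarrow> psi m (w * Mseq m (Suc s) + b) x = psi m (w * Mseq m (Suc s)) x * psi m b x"
    by (rule psi_mult)
  show "(\<Sum>b<Mseq m (Suc s). psi m b x) = 0" using Dzero[of x s "Suc s"] assms by simp
qed (simp_all add: norm_psi)

lemma TT_triv: assumes "\<forall>i. x i < m i" "x s \<noteq> 0"
  shows "norm (TT x R) \<le> R * Mseq m (Suc s)"
proof -
  have "norm (TT x R) \<le> (\<Sum>r<R. norm (DD x r))" unfolding TT_def by (rule norm_sum)
  also have "\<dots> \<le> (\<Sum>r<R. real (Mseq m (Suc s)))" by (intro sum_mono DD_bound assms)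
  finally show ?thesis by simp
qed

lemma DD_shift: assumes "(\<Sum>k<Mseq m t. psi m k x) = 0" "v \<le> Mseq m t"
  shows "DD x (u * Mseq m t + v) = psi m (u * Mseq m t) x * DD x v"
proof -
  have "DD x (u * Mseq m t + v) = (\<Sum>q<u. \<Sum>r<Mseq m t. psi m (q * Mseq m t + r) x) + (\<Sum>r<v. psi m (u * Mseq m t + r) x)"
    unfolding DD_def by (rule sum_blocks2)
  also have "(\<Sum>q<u. \<Sum>r<Mseq m t. psi m (q * Mseq m t + r) x) = 0"
    by (simp add: psi_mult sum_distrib_left[symmetric] assms(1))
  also have "(\<Sum>r<v. psi m (u * Mseq m t + r) x) = psi m (u * Mseq m t) x * DD x v"
    unfolding DD_def sum_distrib_left using assms(2) by (intro sum.cong refl psi_mult) simp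
  finally show ?thesis by simp
qed

lemma TT_shift: assumes "(\<Sum>k<Mseq m t. psi m k x) = 0" "U \<le> Mseq m t"
  shows "TT x (V * Mseq m t + U) = (\<Sum>u<V. psi m (u * Mseq m t) x) * TT x (Mseq m t) + psi m (V * Mseq m t) x * TT x U"
proof -
  have "TT x (V * Mseq m t + U) = (\<Sum>q<V. \<Sum>r<Mseq m t. DD x (q * Mseq m t + r)) + (\<Sum>r<U. DD x (V * Mseq m t + r))"
    unfolding TT_def by (rule sum_blocks2)
  also have "(\<Sum>q<V. \<Sum>r<Mseq m t. DD x (q * Mseq m t + r)) = (\<Sum>q<V. psi m (q * Mseq m t) x * TT x (Mseq m t))"
    unfolding TT_def sum_distrib_left
    by (intro sum.cong refl DD_shift assms(1)) simp
  also have "\<dots> = (\<Sum>u<V. psi m (u * Mseq m t) x) * TT x (Mseq m t)"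
    by (simp add: sum_distrib_right)
  also have "(\<Sum>r<U. DD x (V * Mseq m t + r)) = psi m (V * Mseq m t) x * TT x U"
    unfolding TT_def sum_distrib_left using assms(2) by (intro sum.cong refl DD_shift assms(1)) simp
  finally show ?thesis .
qed

lemma char_t_bound: assumes "\<forall>i. x i < m i" "x t \<noteq> 0"
  shows "norm (\<Sum>u<V. psi m (u * Mseq m t) x) \<le> m t"
proof (rule char_sum_bound[where g = "\<lambda>b. psi m (b * Mseq m t) x"])
  show "0 < m t" by (rule m_pos)
  fix w b assume b: "b < m t"
  have e1: "(w * m t + b) * Mseq m t = w * Mseq m (Suc t) + b * Mseq m t"
    by (simp add: Mseq_Suc algebra_simps)
  have e2: "w * m t * Mseq m t = w * Mseq m (Suc t)" by (simp add: Mseq_Suc algebra_simps)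
  have lt: "b * Mseq m t < Mseq m (Suc t)" using b Mseq_pos[of t] by (simp add: Mseq_Suc)
  show "psi m ((w * m t + b) * Mseq m t) x = psi m (w * m t * Mseq m t) x * psi m (b * Mseq m t) x"
    unfolding e1 e2 by (rule psi_mult[OF lt])
next
  show "(\<Sum>b<m t. psi m (b * Mseq m t) x) = 0"
    using geom0[of x t] assms by (simp add: psi_single)
qed (simp_all add: norm_psi)

lemma TT_bound: assumes x: "\<forall>i. x i < m i" and B: "\<forall>k. m k \<le> B"
  and st: "s < t" "t \<le> N" and xs: "x s \<noteq> 0" and xt: "t = N \<or> x t \<noteq> 0" and R: "R \<le> Mseq m N"
  shows "norm (TT x R) \<le> (real B + 1) * Mseq m (Suc s) * Mseq m t"
proof (cases "t = N")
  case True
  have "norm (TT x R) \<le> R * Mseq m (Suc s)" by (rule TT_triv[OF x xs])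
  also have "\<dots> \<le> real (Mseq m N) * Mseq m (Suc s)"
    using R by (metis of_nat_le_iff of_nat_mult mult_right_mono of_nat_0_le_iff)
  also have "\<dots> = 1 * real (Mseq m (Suc s)) * real (Mseq m t)" using True by simp
  also have "\<dots> \<le> (real B + 1) * Mseq m (Suc s) * Mseq m t" by (intro mult_right_mono) simp_all
  finally show ?thesis .
next
  case False
  then have xt': "x t \<noteq> 0" using xt by simp
  define V U where "V = R div Mseq m t" and "U = R mod Mseq m t"
  have RV: "R = V * Mseq m t + U" using div_mult_mod_eq[of R "Mseq m t"] by (simp add: V_def U_def)
  have U: "U \<le> Mseq m t" using Mseq_pos[of t] by (simp add: U_def less_imp_le)
  have z: "(\<Sum>k<Mseq m t. psi m k x) = 0" using Dzero[of x s t] x xs st by simp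
  have "norm (TT x R) \<le> norm ((\<Sum>u<V. psi m (u * Mseq m t) x) * TT x (Mseq m t)) + norm (psi m (V * Mseq m t) x * TT x U)"
    unfolding RV TT_shift[OF z U] by (rule norm_triangle_ineq)
  also have "\<dots> = norm (\<Sum>u<V. psi m (u * Mseq m t) x) * norm (TT x (Mseq m t)) + norm (TT x U)"
    by (simp add: norm_mult norm_psi)
  also have "\<dots> \<le> real B * (real (Mseq m t) * real (Mseq m (Suc s))) + real U * real (Mseq m (Suc s))"
  proof -
    have h1: "norm (\<Sum>u<V. psi m (u * Mseq m t) x) \<le> real B"
      using char_t_bound[OF x xt', of V] B by (meson of_nat_le_iff order_trans)
    have h2: "norm (TT x (Mseq m t)) \<le> real (Mseq m t) * real (Mseq m (Suc s))"
      using TT_triv[OF x xs, of "Mseq m t"] by simp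
    have h3: "norm (TT x U) \<le> real U * real (Mseq m (Suc s))"
      using TT_triv[OF x xs, of U] by simp
    show ?thesis by (intro add_mono mult_mono h1 h2 h3) simp_all
  qed
  also have "\<dots> \<le> real B * (real (Mseq m t) * real (Mseq m (Suc s))) + real (Mseq m t) * real (Mseq m (Suc s))"
    using U by (intro add_left_mono mult_right_mono) simp_all
  also have "\<dots> = (real B + 1) * Mseq m (Suc s) * Mseq m t" by (simp add: algebra_simps)
  finally show ?thesis .
qed


abbreviation "MM \<equiv> (\<lambda>k. uniform_count_measure {..<m k})"

lemma MM_prob: "prob_space (MM i)"
  by (rule prob_space_uniform_count_measure) (use m_pos[of i] in auto)

sublocale P: product_prob_space MM UNIV
  by (simp add: product_prob_space_def product_prob_space_axioms_def product_sigma_finite_def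
      MM_prob prob_space_imp_sigma_finite)

lemma Gm_eq: "Gm_measure m = PiM UNIV MM" by (simp add: Gm_measure_def)

lemma Gm_prob: "prob_space (Gm_measure m)"
  unfolding Gm_eq by (rule P.prob_space_axioms)

lemma space_Gm: "space (Gm_measure m) = PiE UNIV (\<lambda>k. {..<m k})"
  by (simp add: Gm_measure_def space_PiM space_uniform_count_measure)

lemma cyl_eq: "{y\<in>space (Gm_measure m). \<forall>i<t. y i \<in> X i} = prod_emb UNIV MM {..<t} (PiE {..<t} X)"
  by (auto simp: prod_emb_def space_Gm space_uniform_count_measure PiE_iff)

lemma cyl_sets: "{y\<in>space (Gm_measure m). \<forall>i<t. y i \<in> X i} \<in> sets (Gm_measure m)"
proof -
  have "prod_emb UNIV MM {..<t} (PiE {..<t} (\<lambda>i. X i \<inter> {..<m i})) \<in> sets (PiM UNIV MM)"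
    by (rule sets_PiM_I) (auto simp: sets_uniform_count_measure)
  moreover have "{y\<in>space (Gm_measure m). \<forall>i<t. y i \<in> X i} = prod_emb UNIV MM {..<t} (PiE {..<t} (\<lambda>i. X i \<inter> {..<m i}))"
    by (auto simp: prod_emb_def space_Gm space_uniform_count_measure PiE_iff)
  ultimately show ?thesis by (simp add: Gm_eq)
qed

lemma cyl_measure: assumes "\<And>i. i < t \<Longrightarrow> X i \<subseteq> {..<m i}"
  shows "measure (Gm_measure m) {y\<in>space (Gm_measure m). \<forall>i<t. y i \<in> X i} = (\<Prod>i<t. real (card (X i)) / real (m i))"
proof -
  have "measure (PiM UNIV MM) (prod_emb UNIV MM {..<t} (PiE {..<t} X)) = (\<Prod>i<t. measure (MM i) (X i))"
    by (rule P.measure_PiM_emb) (use assms in \<open>auto simp: sets_uniform_count_measure\<close>)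
  also have "\<dots> = (\<Prod>i<t. real (card (X i)) / real (m i))"
    using assms by (intro prod.cong refl) (simp add: measure_uniform_count_measure)
  finally have c: "measure (PiM UNIV MM) (prod_emb UNIV MM {..<t} (PiE {..<t} X)) = (\<Prod>i<t. real (card (X i)) / real (m i))" .
  show ?thesis unfolding cyl_eq by (simp only: Gm_eq c)
qed

lemma I_set_cyl: "I_set m N = {y\<in>space (Gm_measure m). \<forall>i<N. y i \<in> {0}}"
  by (simp add: I_set_def)

lemma I_sets: "I_set m N \<in> sets (Gm_measure m)"
  unfolding I_set_cyl by (rule cyl_sets)

lemma I_measure: "measure (Gm_measure m) (I_set m N) = 1 / real (Mseq m N)"
proof -
  have "measure (Gm_measure m) (I_set m N) = (\<Prod>i<N. real (card {0::nat}) / real (m i))"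
    unfolding I_set_cyl by (rule cyl_measure) (simp add: m_pos)
  also have "\<dots> = 1 / real (Mseq m N)"
    by (simp add: Mseq_def prod_dividef)
  finally show ?thesis .
qed

definition "EE s t = {y\<in>space (Gm_measure m). \<forall>i<t. y i \<in> (if i = s then {..<m s} else {0})}"

lemma EE_sets: "EE s t \<in> sets (Gm_measure m)"
  unfolding EE_def by (rule cyl_sets)

lemma EE_measure: assumes "s < t"
  shows "measure (Gm_measure m) (EE s t) = real (m s) / real (Mseq m t)"
proof -
  have d: "(\<Prod>i<t. if i = s then real (m s) else 1) = real (m s)"
    using assms by (simp add: prod.delta)
  have "measure (Gm_measure m) (EE s t) = (\<Prod>i<t. real (card (if i = s then {..<m s} else {0::nat})) / real (m i))"
    unfolding EE_def by (rule cyl_measure) (simp add: m_pos)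
  also have "\<dots> = (\<Prod>i<t. (1 / real (m i)) * (if i = s then real (m s) else 1))"
    by (intro prod.cong refl) simp
  also have "\<dots> = (\<Prod>i<t. 1 / real (m i)) * (\<Prod>i<t. if i = s then real (m s) else 1)"
    by (rule prod.distrib)
  also have "\<dots> = (\<Prod>i<t. 1 / real (m i)) * real (m s)"
    by (simp only: d)
  also have "\<dots> = real (m s) / real (Mseq m t)"
    by (simp add: Mseq_def prod_dividef)
  finally show ?thesis .
qed


lemma fourier_block: assumes a0: "\<forall>x\<in>space (Gm_measure m) - I_set m N. a x = 0"
  shows "fourier m a j = fourier m a ((j div Mseq m N) * Mseq m N)"
  unfolding fourier_def
proof (rule Bochner_Integration.integral_cong[OF refl])
  fix y assume y: "y \<in> space (Gm_measure m)"
  show "a y * cnj (psi m j y) = a y * cnj (psi m (j div Mseq m N * Mseq m N) y)"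
  proof (cases "y \<in> I_set m N")
    case True
    then have y0: "\<forall>i<N. y i = 0" by (simp add: I_set_def)
    have r: "j mod Mseq m N < Mseq m N" using Mseq_pos[of N] by simp
    have "psi m j y = psi m (j div Mseq m N * Mseq m N + j mod Mseq m N) y" by (metis div_mult_mod_eq)
    also have "\<dots> = psi m (j div Mseq m N * Mseq m N) y" 
      using psi_mult[OF r] psi_one[OF r y0] by simp
    finally show ?thesis by simp
  next
    case False then show ?thesis using a0 y by simp
  qed
qed

lemma fourier0: assumes a0: "\<forall>x\<in>space (Gm_measure m) - I_set m N. a x = 0"
  and int0: "(LINT x:I_set m N|Gm_measure m. a x) = 0"
  shows "fourier m a 0 = 0"
proof -
  have "fourier m a 0 = (\<integral>x. a x \<partial>Gm_measure m)" unfolding fourier_def by (simp add: psi_0)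
  also have "\<dots> = (LINT x:I_set m N|Gm_measure m. a x)"
    unfolding set_lebesgue_integral_def
    by (rule Bochner_Integration.integral_cong[OF refl]) (use a0 in \<open>auto simp: indicator_def\<close>)
  finally show ?thesis using int0 by simp
qed

lemma fourier_bound: assumes meas: "a \<in> borel_measurable (Gm_measure m)"
  and a0: "\<forall>x\<in>space (Gm_measure m) - I_set m N. a x = 0"
  and bnd: "\<forall>x\<in>space (Gm_measure m). norm (a x) \<le> C"
  shows "norm (fourier m a j) \<le> C / real (Mseq m N)"
proof -
  interpret prob_space "Gm_measure m" by (rule Gm_prob)
  have "norm (fourier m a j) \<le> (\<integral>x. norm (a x * cnj (psi m j x)) \<partial>Gm_measure m)"
    unfolding fourier_def by (rule integral_norm_bound)
  also have "\<dots> = (\<integral>x. norm (a x) \<partial>Gm_measure m)"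
    by (rule Bochner_Integration.integral_cong[OF refl]) (simp add: norm_mult norm_psi)
  also have "\<dots> \<le> (\<integral>x. C * indicator (I_set m N) x \<partial>Gm_measure m)"
  proof (rule integral_mono)
    show "integrable (Gm_measure m) (\<lambda>x. norm (a x))"
      by (rule integrable_const_bound[where B=C]) (use bnd meas in auto)
    show "integrable (Gm_measure m) (\<lambda>x. C * indicator (I_set m N) x)"
      by (rule integrable_const_bound[where B="\<bar>C\<bar>"]) (use I_sets in \<open>auto simp: indicator_def\<close>)
    fix x assume x: "x \<in> space (Gm_measure m)"
    show "norm (a x) \<le> C * indicator (I_set m N) x"
      using a0 bnd x by (cases "x \<in> I_set m N") auto
  qed
  also have "\<dots> = C * measure (Gm_measure m) (I_set m N)"
    using I_sets sets.sets_into_space by (simp add: Int_absorb2)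
  also have "\<dots> = C / real (Mseq m N)" by (simp add: I_measure)
  finally show ?thesis .
qed

lemma partial_sum_form:
  assumes x: "\<forall>i. x i < m i" and nI: "i0 < N" "x i0 \<noteq> 0"
  and fb: "\<And>j. fourier m a j = fourier m a ((j div Mseq m N) * Mseq m N)"
  shows "partial_sum m a k x = fourier m a ((k div Mseq m N) * Mseq m N) * psi m ((k div Mseq m N) * Mseq m N) x * DD x (k mod Mseq m N)"
proof -
  define M where "M = Mseq m N"
  have Mp: "0 < M" by (simp add: M_def Mseq_pos)
  define f where "f j = fourier m a j * psi m j x" for j
  have fr: "f (q * M + r) = fourier m a (q * M) * psi m (q * M) x * psi m r x" if "r < M" for q r
  proof -
    have "(q * M + r) div M = q" using that by simp
    then show ?thesis unfolding f_def M_def using fb[of "q * Mseq m N + r"] psi_mult[of r N q x] that M_def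
      by simp
  qed
  have z: "(\<Sum>r<M. psi m r x) = 0" unfolding M_def using Dzero[OF x nI] .
  have k: "k = (k div M) * M + k mod M" by simp
  have "partial_sum m a k x = (\<Sum>j<(k div M) * M + k mod M. f j)"
    unfolding partial_sum_def f_def using k by simp
  also have "\<dots> = (\<Sum>q<k div M. \<Sum>r<M. f (q*M+r)) + (\<Sum>r<k mod M. f ((k div M)*M+r))"
    by (rule sum_blocks2)
  also have "(\<Sum>q<k div M. \<Sum>r<M. f (q*M+r)) = 0"
    by (simp add: fr sum_distrib_left[symmetric] z)
  also have "(\<Sum>r<k mod M. f ((k div M)*M+r)) = fourier m a ((k div M) * M) * psi m ((k div M) * M) x * DD x (k mod M)"
    unfolding DD_def sum_distrib_left using Mp by (intro sum.cong refl) (simp add: fr[OF less_trans[OF _ mod_less_divisor[OF Mp]]])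
  finally show ?thesis by (simp add: M_def)
qed

lemma fejer_sum_bound:
  assumes x: "\<forall>i. x i < m i" and nI: "i0 < N" "x i0 \<noteq> 0"
  and fb: "\<And>j. fourier m a j = fourier m a ((j div Mseq m N) * Mseq m N)"
  and f0: "fourier m a 0 = 0"
  and fn: "\<And>j. norm (fourier m a j) \<le> A"
  and G: "\<And>R. R \<le> Mseq m N \<Longrightarrow> norm (TT x R) \<le> G"
  shows "norm (\<Sum>k<n. partial_sum m a k x) \<le> (if n < Mseq m N then 0 else (real (n div Mseq m N) + 1) * A * G)"
proof -
  define M where "M = Mseq m N"
  have Mp: "0 < M" by (simp add: M_def Mseq_pos)
  define \<beta> where "\<beta> q = fourier m a (q * M) * psi m (q * M) x" for q
  have nb: "norm (\<beta> q) \<le> A" for q unfolding \<beta>_def by (simp add: norm_mult norm_psi fn)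
  have b0: "\<beta> 0 = 0" unfolding \<beta>_def using f0 by simp
  have ps: "partial_sum m a k x = \<beta> (k div M) * DD x (k mod M)" for k
    unfolding \<beta>_def M_def by (rule partial_sum_form[OF x nI fb])
  have n: "n = (n div M) * M + n mod M" by simp
  have "(\<Sum>k<n. partial_sum m a k x) = (\<Sum>k<(n div M) * M + n mod M. \<beta> (k div M) * DD x (k mod M))"
    using n ps by simp
  also have "\<dots> = (\<Sum>q<n div M. \<Sum>r<M. \<beta> ((q*M+r) div M) * DD x ((q*M+r) mod M))
       + (\<Sum>r<n mod M. \<beta> (((n div M)*M+r) div M) * DD x (((n div M)*M+r) mod M))"
    by (rule sum_blocks2)
  also have "\<dots> = (\<Sum>q<n div M. \<beta> q * TT x M) + \<beta> (n div M) * TT x (n mod M)"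
  proof -
    have l1: "r div M = 0" "r mod M = r" if "r < n mod M" for r
      using that mod_less_divisor[OF Mp, of n] by simp_all
    show ?thesis
      unfolding TT_def sum_distrib_left using Mp
      by (intro arg_cong2[where f="(+)"] sum.cong refl) (simp_all add: l1)
  qed
  finally have eq: "(\<Sum>k<n. partial_sum m a k x) = (\<Sum>q<n div M. \<beta> q * TT x M) + \<beta> (n div M) * TT x (n mod M)" .
  have GM: "norm (TT x M) \<le> G" "norm (TT x (n mod M)) \<le> G"
    using G Mp by (auto simp: M_def less_imp_le)
  show ?thesis
  proof (cases "n < M")
    case True
    then show ?thesis using eq b0 by (simp add: M_def)
  next
    case False
    have "norm (\<Sum>k<n. partial_sum m a k x) \<le> norm (\<Sum>q<n div M. \<beta> q * TT x M) + norm (\<beta> (n div M) * TT x (n mod M))"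
      unfolding eq by (rule norm_triangle_ineq)
    also have "\<dots> \<le> (\<Sum>q<n div M. A * G) + A * G"
    proof (intro add_mono order_trans[OF norm_sum] sum_mono)
      show "norm (\<beta> q * TT x M) \<le> A * G" for q
        unfolding norm_mult by (intro mult_mono nb GM) (use order_trans[OF norm_ge_zero nb[of 0]] in auto)
      show "norm (\<beta> (n div M) * TT x (n mod M)) \<le> A * G"
        unfolding norm_mult by (intro mult_mono nb GM) (use order_trans[OF norm_ge_zero nb[of 0]] in auto)
    qed
    also have "\<dots> = (real (n div M) + 1) * A * G" by (simp add: algebra_simps)
    finally show ?thesis using False by (simp add: M_def)
  qed
qed


lemma ratio_bound:
  assumes x: "\<forall>i. x i < m i" and nI: "i0 < N" "x i0 \<noteq> 0"
  and fb: "\<And>j. fourier m a j = fourier m a ((j div Mseq m N) * Mseq m N)"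
  and f0: "fourier m a 0 = 0"
  and fn: "\<And>j. norm (fourier m a j) \<le> real (Mseq m N) powr (1/p) / real (Mseq m N)"
  and G: "\<And>R. R \<le> Mseq m N \<Longrightarrow> norm (TT x R) \<le> G"
  and p: "0 < p" "p < 1/2"
  shows "norm (fejer m a n x) / real (n+1) powr (1/p - 2) \<le> 2 * G"
proof -
  define M where "M = real (Mseq m N)"
  define A where "A = M powr (1/p) / M"
  define e where "e = 1/p - 2"
  have e: "0 < e" using p by (simp add: e_def field_simps)
  have M1: "1 \<le> M" using Mseq_pos[of N] by (simp add: M_def)
  have G0: "0 \<le> G" using G[of 0] by (meson norm_ge_zero order_trans zero_le)
  have A0: "0 \<le> A" using M1 by (simp add: A_def)
  define S where "S = norm (\<Sum>k<n. partial_sum m a k x)"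
  have Sb: "S \<le> (if n < Mseq m N then 0 else (real (n div Mseq m N) + 1) * A * G)"
    unfolding S_def A_def M_def by (rule fejer_sum_bound[OF x nI fb f0 fn G])
  have nf: "norm (fejer m a n x) = S / real n"
    by (simp add: fejer_def S_def norm_divide)
  show ?thesis
  proof (cases "n < Mseq m N")
    case True
    then have "S \<le> 0" using Sb by simp
    then have "S = 0" by (simp add: S_def)
    then show ?thesis using nf G0 by simp
  next
    case False
    define Q where "Q = n div Mseq m N"
    have QM: "Q * Mseq m N \<le> n" by (simp add: Q_def div_times_less_eq_dividend)
    have Mn: "Mseq m N \<le> n" using False by simp
    have n0: "0 < real n" using Mn Mseq_pos[of N] by simp
    have q: "(real Q + 1) * M \<le> 2 * real n"
    proof -
      have "real Q * M \<le> real n" using QM unfolding M_def by (metis of_nat_le_iff of_nat_mult)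
      moreover have "M \<le> real n" using Mn by (simp add: M_def)
      ultimately show ?thesis by (simp add: algebra_simps)
    qed
    have "norm (fejer m a n x) = S / real n" by (rule nf)
    also have "\<dots> \<le> (real Q + 1) * A * G / real n"
      using Sb False n0 by (intro divide_right_mono) (simp_all add: Q_def)
    also have "\<dots> \<le> 2 * A * G / M"
    proof -
      have "(real Q + 1) * A * G * M \<le> 2 * real n * (A * G)"
        using mult_right_mono[OF q, of "A * G"] A0 G0 by (simp add: algebra_simps)
      then show ?thesis using n0 M1 by (simp add: field_simps)
    qed
    finally have fb2: "norm (fejer m a n x) \<le> 2 * A * G / M" .
    have Me: "M powr e \<le> real (n+1) powr e"
      using Mn e M1 by (intro powr_mono2) (simp_all add: M_def)
    have Mep: "0 < M powr e" using M1 by simp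
    have "norm (fejer m a n x) / real (n+1) powr e \<le> (2 * A * G / M) / M powr e"
    proof -
      have "norm (fejer m a n x) / real (n+1) powr e \<le> (2 * A * G / M) / real (n+1) powr e"
        using fb2 by (intro divide_right_mono) simp_all
      also have "\<dots> \<le> (2 * A * G / M) / M powr e"
        using Me Mep A0 G0 M1 by (intro divide_left_mono) simp_all
      finally show ?thesis .
    qed
    also have "(2 * A * G / M) / M powr e = 2 * G"
    proof -
      have "M powr (1/p) = M powr e * M powr 2"
        unfolding e_def powr_add[symmetric] by simp
      also have "M powr 2 = M * M" using M1 by (simp add: power2_eq_square)
      finally have "M powr (1/p) = M powr e * (M * M)" .
      then show ?thesis using Mep M1 by (simp add: A_def field_simps)
    qed
    finally show ?thesis by (simp add: e_def)
  qed
qed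

end

lemma ennpowr_le: assumes "S \<le> ennreal c" "0 \<le> c" "0 < p"
  shows "ennpowr S p \<le> ennreal (c powr p)"
proof -
  have "S \<noteq> \<infinity>" using assms(1) by (auto simp: top_unique)
  moreover have "enn2real S \<le> c" by (rule enn2real_leI[OF assms(2,1)])
  ultimately show ?thesis unfolding ennpowr_def
    using assms by (auto intro!: ennreal_leI powr_mono2)
qed

lemma summable_n_rn: fixes r :: real assumes "0 \<le> r" "r < 1"
  shows "summable (\<lambda>n. real n * r ^ n)"
proof -
  define q where "q = sqrt r"
  have q: "0 \<le> q" "q < 1" using assms by (auto simp: q_def)
  have "(\<lambda>n. of_nat n * q ^ n) \<longlonglongrightarrow> 0"
    by (rule powser_times_n_limit_0) (use q in simp)
  then have "Bseq (\<lambda>n. real n * q ^ n)" by (intro convergent_imp_Bseq) (auto simp: convergent_def)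
  then obtain K where K: "0 < K" "\<And>n. norm (real n * q ^ n) \<le> K" using BseqD by blast
  show ?thesis
  proof (rule summable_comparison_test)
    show "summable (\<lambda>n. K * q ^ n)" using q by (intro summable_mult summable_geometric) simp
    show "\<exists>N. \<forall>n\<ge>N. norm (real n * r ^ n) \<le> K * q ^ n"
    proof (intro exI allI impI)
      fix n :: nat
      have r2: "r = q * q" using assms by (simp add: q_def)
      have r: "r ^ n = q ^ n * q ^ n" by (simp add: r2 power_mult_distrib)
      have "norm (real n * r ^ n) = real n * r ^ n" using assms by simp
      also have "\<dots> = (real n * q ^ n) * q ^ n" by (simp add: r)
      also have "\<dots> \<le> K * q ^ n" using K(2)[of n] q by (intro mult_right_mono) simp_all
      finally show "norm (real n * r ^ n) \<le> K * q ^ n" .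
    qed
  qed
qed



context vil begin

lemma pointwise:
  assumes B: "\<forall>k. m k \<le> B" and p: "0 < p" "p < 1/2"
  and fb: "\<And>j. fourier m a j = fourier m a ((j div Mseq m N) * Mseq m N)"
  and f0: "fourier m a 0 = 0"
  and fn: "\<And>j. norm (fourier m a j) \<le> real (Mseq m N) powr (1/p) / real (Mseq m N)"
  and x: "x \<in> space (Gm_measure m)"
  shows "ennpowr (\<Squnion>n\<in>{1..}. ennreal (norm (fejer m a n x) / real (n+1) powr (1/p - 2))) p
           * indicator (space (Gm_measure m) - I_set m N) x
       \<le> (\<Sum>t\<in>{..N}. \<Sum>s\<in>{..<t}. ennreal ((2 * ((real B + 1) * Mseq m (Suc s) * Mseq m t)) powr p) * indicator (EE s t) x)"
proof (cases "x \<in> I_set m N")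
  case True then show ?thesis by simp
next
  case False
  have xm: "\<forall>i. x i < m i" using x by (auto simp: space_Gm PiE_iff)
  obtain i0 where i0: "i0 < N" "x i0 \<noteq> 0" using False x by (auto simp: I_set_def)
  define s where "s = (LEAST i. x i \<noteq> 0)"
  have xs: "x s \<noteq> 0" unfolding s_def by (rule LeastI[of _ i0]) (rule i0(2))
  have si0: "s \<le> i0" unfolding s_def by (rule Least_le) (rule i0(2))
  have sN: "s < N" using si0 i0 by simp
  have below: "x i = 0" if "i < s" for i using not_less_Least[OF that[unfolded s_def]] by simp
  define t where "t = (LEAST j. s < j \<and> (j = N \<or> x j \<noteq> 0))"
  have tp: "s < t \<and> (t = N \<or> x t \<noteq> 0)" unfolding t_def by (rule LeastI[of _ N]) (use sN in simp)
  have tN: "t \<le> N" unfolding t_def by (rule Least_le) (use sN in simp)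
  have between: "x i = 0" if "s < i" "i < t" for i
  proof -
    have "\<not> (s < i \<and> (i = N \<or> x i \<noteq> 0))" using not_less_Least[OF that(2)[unfolded t_def]] .
    then show ?thesis using that tN by auto
  qed
  have xE: "x \<in> EE s t"
    unfolding EE_def using x xm below between
    by (auto simp: linorder_neq_iff)
  define G where "G = (real B + 1) * Mseq m (Suc s) * Mseq m t"
  have G0: "0 \<le> G" by (simp add: G_def)
  have TG: "norm (TT x R) \<le> G" if "R \<le> Mseq m N" for R
    unfolding G_def using tp by (intro TT_bound[OF xm B _ tN xs _ that]) auto
  have rb: "norm (fejer m a n x) / real (n+1) powr (1/p - 2) \<le> 2 * G" for n
    by (rule ratio_bound[OF xm i0 fb f0 fn TG p])
  have sup: "(\<Squnion>n\<in>{1..}. ennreal (norm (fejer m a n x) / real (n+1) powr (1/p - 2))) \<le> ennreal (2 * G)"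
    by (rule SUP_least) (rule ennreal_leI[OF rb])
  have "ennpowr (\<Squnion>n\<in>{1..}. ennreal (norm (fejer m a n x) / real (n+1) powr (1/p - 2))) p
           * indicator (space (Gm_measure m) - I_set m N) x
        = ennpowr (\<Squnion>n\<in>{1..}. ennreal (norm (fejer m a n x) / real (n+1) powr (1/p - 2))) p"
    using False x by simp
  also have "\<dots> \<le> ennreal ((2 * G) powr p)"
    by (rule ennpowr_le[OF sup]) (use G0 p in auto)
  also have "\<dots> = ennreal ((2 * ((real B + 1) * Mseq m (Suc s) * Mseq m t)) powr p) * indicator (EE s t) x"
    using xE by (simp add: G_def)
  also have "\<dots> \<le> (\<Sum>s'\<in>{..<t}. ennreal ((2 * ((real B + 1) * Mseq m (Suc s') * Mseq m t)) powr p) * indicator (EE s' t) x)"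
    by (rule member_le_sum[where i=s]) (use tp in auto)
  also have "\<dots> \<le> (\<Sum>t'\<in>{..N}. \<Sum>s'\<in>{..<t'}. ennreal ((2 * ((real B + 1) * Mseq m (Suc s') * Mseq m t')) powr p) * indicator (EE s' t') x)"
    by (rule member_le_sum[where i=t]) (use tN in auto)
  finally show ?thesis .
qed

lemma term_bound:
  assumes B: "\<forall>k. m k \<le> B" and p: "0 < p" "p < 1/2" and st: "s < t"
  shows "(2 * ((real B + 1) * Mseq m (Suc s) * Mseq m t)) powr p * (real (m s) / real (Mseq m t))
     \<le> (2 * (real B + 1)) powr p * real B * (2 powr (2*p - 1)) ^ t"
proof -
  define Mt where "Mt = real (Mseq m t)"
  have Mt1: "1 \<le> Mt" using Mseq_pos[of t] by (simp add: Mt_def)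
  have Ms: "real (Mseq m (Suc s)) \<le> Mt" using Mseq_mono[of "Suc s" t] st by (simp add: Mt_def)
  have Bp: "0 \<le> real B" by simp
  have ms: "real (m s) \<le> real B" using B by simp
  have "(2 * ((real B + 1) * Mseq m (Suc s) * Mseq m t)) powr p \<le> (2 * (real B + 1) * (Mt * Mt)) powr p"
  proof (rule powr_mono2)
    have "real (Mseq m (Suc s)) * Mt \<le> Mt * Mt" using Ms Mt1 by (intro mult_right_mono) auto
    from mult_left_mono[OF this, of "2 * (real B + 1)"]
    show "2 * ((real B + 1) * Mseq m (Suc s) * Mseq m t) \<le> 2 * (real B + 1) * (Mt * Mt)"
      by (simp add: Mt_def algebra_simps)
  qed (use p in auto)
  also have "\<dots> = (2 * (real B + 1)) powr p * Mt powr (2 * p)"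
  proof -
    have "(Mt * Mt) powr p = Mt powr p * Mt powr p" using Mt1 by (simp add: powr_mult)
    also have "\<dots> = Mt powr (p + p)" by (rule powr_add[symmetric])
    finally have mm: "(Mt * Mt) powr p = Mt powr (2 * p)" by (simp only: mult_2)
    have "(2 * (real B + 1) * (Mt * Mt)) powr p = (2 * (real B + 1)) powr p * (Mt * Mt) powr p"
      using Mt1 by (simp add: powr_mult)
    then show ?thesis by (simp only: mm)
  qed
  finally have h1: "(2 * ((real B + 1) * Mseq m (Suc s) * Mseq m t)) powr p \<le> (2 * (real B + 1)) powr p * Mt powr (2 * p)" .
  have "(2 * ((real B + 1) * Mseq m (Suc s) * Mseq m t)) powr p * (real (m s) / real (Mseq m t))
      \<le> (2 * (real B + 1)) powr p * Mt powr (2 * p) * (real B / Mt)"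
  proof (rule mult_mono[OF h1])
    show "real (m s) / real (Mseq m t) \<le> real B / Mt"
      unfolding Mt_def using ms Mt1 by (intro divide_right_mono) (auto simp: Mt_def)
  qed (use Mt1 in auto)
  also have "\<dots> = (2 * (real B + 1)) powr p * real B * Mt powr (2 * p - 1)"
  proof -
    have "Mt powr (2 * p - 1) = Mt powr (2 * p) / Mt powr 1" by (rule powr_diff)
    also have "\<dots> = Mt powr (2 * p) / Mt" using Mt1 by simp
    finally have e1: "Mt powr (2 * p - 1) = Mt powr (2 * p) / Mt" .
    show ?thesis using Mt1 by (simp only: e1) (simp add: field_simps)
  qed
  also have "\<dots> \<le> (2 * (real B + 1)) powr p * real B * (2 powr (2*p - 1)) ^ t"
  proof (intro mult_left_mono)
    have "Mt powr (2 * p - 1) \<le> (2 ^ t) powr (2 * p - 1)"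
      using p Mseq_pow2[of t] by (intro powr_mono2') (auto simp: Mt_def)
    also have "(2 ^ t) powr (2 * p - 1) = (2 powr (2*p - 1)) ^ t"
    proof -
      have "((2::real) ^ t) powr (2 * p - 1) = (2 powr real t) powr (2 * p - 1)"
        by (simp add: powr_realpow)
      also have "\<dots> = 2 powr (real t * (2 * p - 1))" by (rule powr_powr)
      also have "\<dots> = (2 powr (2 * p - 1)) powr real t" by (simp add: powr_powr mult.commute)
      also have "\<dots> = (2 powr (2*p - 1)) ^ t" by (rule powr_realpow) simp
      finally show ?thesis .
    qed
    finally show "Mt powr (2 * p - 1) \<le> (2 powr (2*p - 1)) ^ t" .
  qed simp_all
  finally show ?thesis .
qed

end


theorem mainTheorem4:
  fixes p :: real and m :: "nat \<Rightarrow> nat"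
  assumes "0 < p" and "p < 1/2"
    and "\<And>k. 2 \<le> m k"
    and "\<exists>B. \<forall>k. m k \<le> B"
  shows "\<exists>c::real. \<forall>(N::nat) (a :: (nat \<Rightarrow> nat) \<Rightarrow> complex).
     a \<in> borel_measurable (Gm_measure m)
     \<and> (\<forall>x \<in> space (Gm_measure m) - I_set m N. a x = 0)
     \<and> (LINT x:I_set m N|Gm_measure m. a x) = 0
     \<and> (\<forall>x \<in> space (Gm_measure m). norm (a x) \<le> real (Mseq m N) powr (1/p))
     \<longrightarrow> (\<integral>\<^sup>+ x \<in> space (Gm_measure m) - I_set m N.
            ennpowr (\<Squnion>n\<in>{1..}. ennreal (norm (fejer m a n x) / real (n+1) powr (1/p - 2))) p
          \<partial>Gm_measure m) \<le> ennreal c"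
proof -
  obtain B where B: "\<forall>k. m k \<le> B" using assms(4) by blast
  interpret vil m by unfold_locales (rule assms(3))
  interpret prob_space "Gm_measure m" by (rule Gm_prob)
  define r where "r = (2::real) powr (2*p - 1)"
  define K where "K = (2 * (real B + 1)) powr p * real B"
  have r: "0 \<le> r" "r < 1"
  proof -
    show "0 \<le> r" by (simp add: r_def)
    have "(2::real) powr (2*p - 1) < 2 powr 0" using assms(2) by (intro powr_less_mono) auto
    then show "r < 1" by (simp add: r_def)
  qed
  have K0: "0 \<le> K" by (simp add: K_def)
  have summ: "summable (\<lambda>t. real t * r ^ t)" by (rule summable_n_rn[OF r])
  define c where "c = K * suminf (\<lambda>t. real t * r ^ t)"
  show ?thesis
  proof (intro exI allI impI)
    fix N :: nat and a :: "(nat \<Rightarrow> nat) \<Rightarrow> complex"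
    assume H: "a \<in> borel_measurable (Gm_measure m)
     \<and> (\<forall>x \<in> space (Gm_measure m) - I_set m N. a x = 0)
     \<and> (LINT x:I_set m N|Gm_measure m. a x) = 0
     \<and> (\<forall>x \<in> space (Gm_measure m). norm (a x) \<le> real (Mseq m N) powr (1/p))"
    then have meas: "a \<in> borel_measurable (Gm_measure m)"
      and a0: "\<forall>x \<in> space (Gm_measure m) - I_set m N. a x = 0"
      and int0: "(LINT x:I_set m N|Gm_measure m. a x) = 0"
      and bnd: "\<forall>x \<in> space (Gm_measure m). norm (a x) \<le> real (Mseq m N) powr (1/p)" by auto
    have fb: "\<And>j. fourier m a j = fourier m a ((j div Mseq m N) * Mseq m N)"
      by (rule fourier_block[OF a0])
    have f0: "fourier m a 0 = 0" by (rule fourier0[OF a0 int0])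
    have fn: "\<And>j. norm (fourier m a j) \<le> real (Mseq m N) powr (1/p) / real (Mseq m N)"
      by (rule fourier_bound[OF meas a0 bnd])
    define cst where "cst s t = (2 * ((real B + 1) * Mseq m (Suc s) * Mseq m t)) powr p" for s t
    have EEm[measurable]: "EE s t \<in> sets (Gm_measure m)" for s t by (rule EE_sets)
    have "(\<integral>\<^sup>+ x \<in> space (Gm_measure m) - I_set m N.
            ennpowr (\<Squnion>n\<in>{1..}. ennreal (norm (fejer m a n x) / real (n+1) powr (1/p - 2))) p
          \<partial>Gm_measure m)
        \<le> (\<integral>\<^sup>+ x. (\<Sum>t\<in>{..N}. \<Sum>s\<in>{..<t}. ennreal (cst s t) * indicator (EE s t) x) \<partial>Gm_measure m)"
      by (rule nn_integral_mono) (unfold cst_def, rule pointwise[OF B assms(1,2) fb f0 fn])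
    also have "\<dots> = (\<Sum>t\<in>{..N}. \<integral>\<^sup>+ x. (\<Sum>s\<in>{..<t}. ennreal (cst s t) * indicator (EE s t) x) \<partial>Gm_measure m)"
      by (rule nn_integral_sum) measurable
    also have "\<dots> = (\<Sum>t\<in>{..N}. \<Sum>s\<in>{..<t}. \<integral>\<^sup>+ x. ennreal (cst s t) * indicator (EE s t) x \<partial>Gm_measure m)"
      by (intro sum.cong refl nn_integral_sum) measurable
    also have "\<dots> = (\<Sum>t\<in>{..N}. \<Sum>s\<in>{..<t}. ennreal (cst s t) * emeasure (Gm_measure m) (EE s t))"
      by (intro sum.cong refl nn_integral_cmult_indicator EEm)
    also have "\<dots> = (\<Sum>t\<in>{..N}. \<Sum>s\<in>{..<t}. ennreal (cst s t * (real (m s) / real (Mseq m t))))"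
      by (intro sum.cong refl, subst ennreal_mult'') (simp_all add: emeasure_eq_measure EE_measure)
    also have "\<dots> = ennreal (\<Sum>t\<in>{..N}. \<Sum>s\<in>{..<t}. cst s t * (real (m s) / real (Mseq m t)))"
      by (simp add: cst_def sum_nonneg)
    also have "\<dots> \<le> ennreal c"
    proof (rule ennreal_leI)
      have "(\<Sum>t\<in>{..N}. \<Sum>s\<in>{..<t}. cst s t * (real (m s) / real (Mseq m t)))
          \<le> (\<Sum>t\<in>{..N}. \<Sum>s\<in>{..<t}. K * r ^ t)"
        unfolding cst_def K_def r_def
        by (intro sum_mono term_bound[OF B assms(1,2)]) auto
      also have "\<dots> = K * (\<Sum>t<Suc N. real t * r ^ t)"
        by (simp add: sum_distrib_left lessThan_Suc_atMost mult_ac)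
      also have "\<dots> \<le> K * suminf (\<lambda>t. real t * r ^ t)"
        using r K0 by (intro mult_left_mono sum_le_suminf[OF summ]) auto
      finally show "(\<Sum>t\<in>{..N}. \<Sum>s\<in>{..<t}. cst s t * (real (m s) / real (Mseq m t))) \<le> c"
        by (simp add: c_def)
    qed
    finally show "(\<integral>\<^sup>+ x \<in> space (Gm_measure m) - I_set m N.
            ennpowr (\<Squnion>n\<in>{1..}. ennreal (norm (fejer m a n x) / real (n+1) powr (1/p - 2))) p
          \<partial>Gm_measure m) \<le> ennreal c" .
  qed
qed

end
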